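(* Let $d$ be even, let $\nu:\mathbb R\to\mathbb R$ satisfy $\nu(x+y)=\nu(x)+\nu(y)$ for all $x,y$, and let $A\in\mathbb R^{d\times d}$ be invertible. Suppose $S(x):=AQ_d^\nu(x)A^{-1}$ is an orthogonal matrix for every $x\ge0$ (with respect to the standard inner product on $\mathbb R^d$). Then there exists an orthogonal matrix $U\in\mathbb R^{d\times d}$ such that $S(x)=UQ_d^\nu(x)U^{\mathrm T}$ for all $x\ge0$.
   Context: For $\theta\in\mathbb R$, $Q(\theta)=\begin{pmatrix}\cos\theta&\sin\theta\\-\sin\theta&\cos\theta\end{pmatrix}$, and for even $k$, $Q_k^\nu(x)\in\mathbb R^{k\times k}$ is the block-diagonal matrix with $k/2$ diagonal blocks all equal to $Q(\nu(x))$. *)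

theory Defs
  imports Complex_Main "Jordan_Normal_Form.Matrix"
begin

text \<open>Block-diagonal rotation matrix Q_k(theta), indices 0-based: the j-th 2x2 block
  occupies rows/cols 2j, 2j+1 and equals [[cos, sin], [-sin, cos]].\<close>
definition Qblk :: "nat \<Rightarrow> real \<Rightarrow> real mat" where
  "Qblk k \<theta> = mat k k (\<lambda>(i, j).
     if i div 2 \<noteq> j div 2 then 0
     else if i = j then cos \<theta>
     else if even i then sin \<theta>
     else - sin \<theta>)"

definition orth_mat :: "nat \<Rightarrow> real mat \<Rightarrow> bool" where
  "orth_mat d U \<longleftrightarrow> U \<in> carrier_mat d d \<and> transpose_mat U * U = 1\<^sub>m d"

end

theory Submission
  imports Defs "Jordan_Normal_Form.Determinant"
begin

definition Jm :: "nat \<Rightarrow> real mat" where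
  "Jm k = mat k k (\<lambda>(i, j). if i div 2 \<noteq> j div 2 then 0 else if i = j then 0
     else if even i then 1 else -1)"

definition pt :: "nat \<Rightarrow> nat" where "pt i = (if even i then Suc i else i - 1)"

lemma Jm_carrier[simp]: "Jm k \<in> carrier_mat k k" by (simp add: Jm_def)
lemma Jm_dim[simp]: "dim_row (Jm k) = k" "dim_col (Jm k) = k" by (simp_all add: Jm_def)

lemma mult_entry: "A \<in> carrier_mat n m \<Longrightarrow> B \<in> carrier_mat m p \<Longrightarrow> i < n \<Longrightarrow> j < p \<Longrightarrow>
   (A * B) $$ (i,j) = (\<Sum>l\<in>{0..<m}. A $$ (i,l) * B $$ (l,j))"
  by (auto simp: scalar_prod_def intro!: sum.cong)

lemma Qblk_decomp: "Qblk k t = cos t \<cdot>\<^sub>m 1\<^sub>m k + sin t \<cdot>\<^sub>m Jm k"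
  by (rule eq_matI, auto simp: Qblk_def Jm_def)

lemma pt_lt: "even d \<Longrightarrow> i < d \<Longrightarrow> pt i < d"
  by (auto simp: pt_def elim!: evenE oddE) 

lemma Jm_entry: assumes "even d" "l < d" "j < d"
  shows "Jm d $$ (l, j) = (if l = pt j then (if even j then -1 else 1) else 0)"
  using assms unfolding Jm_def pt_def by (auto elim!: evenE oddE) 

lemma Jm_entry2: assumes "even d" "l < d" "j < d"
  shows "Jm d $$ (j, l) = (if l = pt j then (if even j then 1 else -1) else 0)"
  using assms unfolding Jm_def pt_def by (auto elim!: evenE oddE) 

lemma pt_pt: "pt (pt i) = i" by (auto simp: pt_def)
lemma pt_eq[simp]: "pt i = pt j \<longleftrightarrow> i = j" by (metis pt_pt)
lemma even_pt: "even (pt i) \<longleftrightarrow> odd i" by (auto simp: pt_def)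

lemma Jm_sq: assumes "even d" shows "Jm d * Jm d = - 1\<^sub>m d"
proof (rule eq_matI)
  fix i j assume ij: "i < dim_row (- 1\<^sub>m d)" "j < dim_col (- 1\<^sub>m d)"
  hence i: "i < d" and j: "j < d" by auto
  have "(Jm d * Jm d) $$ (i,j) = (\<Sum>l\<in>{0..<d}. Jm d $$ (i,l) * Jm d $$ (l,j))"
    using i j by (intro mult_entry) auto
  also have "\<dots> = (\<Sum>l\<in>{0..<d}. if l = pt i then (if even i then 1 else -1) * Jm d $$ (l,j) else 0)"
    by (rule sum.cong, simp, subst Jm_entry2[OF assms _ i], auto)
  also have "\<dots> = (if even i then 1 else -1) * Jm d $$ (pt i,j)"
    using pt_lt[OF assms i] by simp
  also have "\<dots> = - 1\<^sub>m d $$ (i,j)"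
    using i j pt_lt[OF assms i] by (auto simp: Jm_entry[OF assms] pt_pt even_pt)
  finally show "(Jm d * Jm d) $$ (i,j) = (- 1\<^sub>m d) $$ (i,j)" using i j by simp
qed auto


lemma sum_split_lt: fixes n d :: nat assumes "n \<le> d"
  shows "(\<Sum>k\<in>{0..<d}. if k < n then f k else 0) = (\<Sum>k\<in>{0..<n}. (f k :: real))"
proof -
  have "(\<Sum>k\<in>{0..<d}. if k < n then f k else 0) = (\<Sum>k\<in>{0..<n}. if k < n then f k else 0) + (\<Sum>k\<in>{n..<d}. if k < n then f k else 0)"
    using sum.atLeastLessThan_concat[of 0 n d "\<lambda>k. if k<n then f k else 0"] assms by simp
  also have "\<dots> = (\<Sum>k\<in>{0..<n}. f k)" by simp
  finally show ?thesis .
qed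

lemma exists_orth:
  fixes u :: "nat \<Rightarrow> real vec"
  assumes nd: "n < d" and car: "\<forall>k<n. u k \<in> carrier_vec d"
    and on: "\<forall>k<n. \<forall>l<n. u k \<bullet> u l = (if k = l then 1 else 0)"
  shows "\<exists>v \<in> carrier_vec d. v \<bullet> v = 1 \<and> (\<forall>k<n. v \<bullet> u k = 0)"
proof -
  define w where "w i = vec d (\<lambda>l. (if l = i then 1 else 0) - (\<Sum>k\<in>{0..<n}. u k $ i * u k $ l))" for i
  have wc: "w i \<in> carrier_vec d" for i by (simp add: w_def)
  have worth: "w i \<bullet> u k = 0" if i: "i < d" and k: "k < n" for i k
  proof -
    have uk: "u k \<in> carrier_vec d" using car k by auto
    have "w i \<bullet> u k = (\<Sum>l\<in>{0..<d}. ((if l = i then 1 else 0) - (\<Sum>m\<in>{0..<n}. u m $ i * u m $ l)) * u k $ l)"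
      using uk by (simp add: w_def scalar_prod_def)
    also have "\<dots> = (\<Sum>l\<in>{0..<d}. (if l = i then 1 else 0) * u k $ l) - (\<Sum>l\<in>{0..<d}. (\<Sum>m\<in>{0..<n}. u m $ i * u m $ l) * u k $ l)"
      by (simp only: left_diff_distrib sum_subtractf)
    also have "(\<Sum>l\<in>{0..<d}. (if l = i then 1 else 0) * u k $ l) = (\<Sum>l\<in>{0..<d}. if l = i then u k $ l else 0)"
      by (rule sum.cong) auto
    also have "\<dots> = u k $ i" using i by simp
    also have "(\<Sum>l\<in>{0..<d}. (\<Sum>m\<in>{0..<n}. u m $ i * u m $ l) * u k $ l) = (\<Sum>l\<in>{0..<d}. \<Sum>m\<in>{0..<n}. u m $ i * (u m $ l * u k $ l))"
      by (simp add: sum_distrib_right mult.assoc)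
    also have "(\<Sum>l\<in>{0..<d}. \<Sum>m\<in>{0..<n}. u m $ i * (u m $ l * u k $ l)) = (\<Sum>m\<in>{0..<n}. u m $ i * (u m \<bullet> u k))"
      using uk by (subst sum.swap) (simp add: scalar_prod_def sum_distrib_left)
    also have "\<dots> = (\<Sum>m\<in>{0..<n}. if m = k then u k $ i else 0)"
      using on k by (intro sum.cong) auto
    also have "\<dots> = u k $ i" using k by simp
    finally show ?thesis by simp
  qed
  show ?thesis
  proof (cases "\<exists>i<d. w i \<noteq> 0\<^sub>v d")
    case True
    then obtain i where i: "i < d" "w i \<noteq> 0\<^sub>v d" by auto
    have pos: "w i \<bullet> w i > 0"
    proof -
      have "w i \<bullet> w i \<ge> 0" by (simp add: scalar_prod_def sum_nonneg)
      moreover have "w i \<bullet> w i \<noteq> 0"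
      proof
        assume z: "w i \<bullet> w i = 0"
        have "\<forall>l\<in>{0..<d}. w i $ l * w i $ l = 0"
          using z wc[of i] by (subst sum_nonneg_eq_0_iff[symmetric]) (auto simp: scalar_prod_def)
        hence "w i = 0\<^sub>v d" using wc[of i] by (intro eq_vecI) auto
        with i show False by simp
      qed
      ultimately show ?thesis by simp
    qed
    define v where "v = (1 / sqrt (w i \<bullet> w i)) \<cdot>\<^sub>v w i"
    have "v \<bullet> v = (w i \<bullet> w i) / (sqrt (w i \<bullet> w i) * sqrt (w i \<bullet> w i))" using wc[of i] by (simp add: v_def)
    also have "\<dots> = 1" using pos by simp
    finally have "v \<bullet> v = 1" .
    moreover have "\<forall>k<n. v \<bullet> u k = 0" using worth[OF i(1)] wc[of i] car by (simp add: v_def)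
    moreover have "v \<in> carrier_vec d" using wc by (simp add: v_def)
    ultimately show ?thesis by blast
  next
    case False
    hence w0: "\<And>i l. i < d \<Longrightarrow> l < d \<Longrightarrow> (if l = i then 1 else 0) = (\<Sum>k\<in>{0..<n}. u k $ i * u k $ l)"
    proof -
      fix i l assume "i < d" "l < d"
      with False have "w i $ l = 0" by auto
      thus "(if l = i then 1 else 0) = (\<Sum>k\<in>{0..<n}. u k $ i * u k $ l)" using \<open>l < d\<close> by (simp add: w_def)
    qed
    define W where "W = mat d d (\<lambda>(l,k). if k < n then u k $ l else (0::real))"
    have Wc: "W \<in> carrier_mat d d" by (simp add: W_def)
    have "W * transpose_mat W = 1\<^sub>m d"
    proof (rule eq_matI)
      fix l i assume "l < dim_row (1\<^sub>m d :: real mat)" "i < dim_col (1\<^sub>m d :: real mat)"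
      hence l: "l < d" and i: "i < d" by auto
      have "(W * transpose_mat W) $$ (l,i) = (\<Sum>k\<in>{0..<d}. W $$ (l,k) * transpose_mat W $$ (k,i))"
        using Wc l i by (intro mult_entry) auto
      also have "\<dots> = (\<Sum>k\<in>{0..<d}. if k < n then u k $ i * u k $ l else 0)"
        using l i by (intro sum.cong) (auto simp: W_def)
      also have "\<dots> = (\<Sum>k\<in>{0..<n}. u k $ i * u k $ l)" using nd by (simp add: sum_split_lt)
      also have "\<dots> = 1\<^sub>m d $$ (l,i)" using w0[OF i l] l i by simp
      finally show "(W * transpose_mat W) $$ (l,i) = 1\<^sub>m d $$ (l,i)" .
    qed (simp_all add: W_def)
    moreover have WT: "transpose_mat W \<in> carrier_mat d d" using Wc by simp
    ultimately have "transpose_mat W * W = 1\<^sub>m d"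
      using mat_mult_left_right_inverse[OF Wc WT] by blast
    hence "(transpose_mat W * W) $$ (n,n) = 1" using nd by simp
    moreover have "(transpose_mat W * W) $$ (n,n) = (\<Sum>k\<in>{0..<d}. transpose_mat W $$ (n,k) * W $$ (k,n))"
      using Wc nd by (intro mult_entry) auto
    moreover have "\<dots> = 0" using nd by (intro sum.neutral) (auto simp: W_def)
    ultimately show ?thesis by simp
  qed
qed


locale skewK =
  fixes d :: nat and K :: "real mat"
  assumes ev: "even d" and Kc: "K \<in> carrier_mat d d"
    and skew: "transpose_mat K = - K" and sq: "K * K = - 1\<^sub>m d"
begin

lemma F1: assumes w: "w \<in> carrier_vec d" and z: "z \<in> carrier_vec d"
  shows "(K *\<^sub>v w) \<bullet> z = - (w \<bullet> (K *\<^sub>v z))"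
proof -
  have "(transpose_mat K *\<^sub>v w) \<bullet> z = w \<bullet> (K *\<^sub>v z)"
    by (rule transpose_vec_mult_scalar[OF Kc z w])
  moreover have "transpose_mat K *\<^sub>v w = - (K *\<^sub>v w)" using skew w Kc by simp
  ultimately show ?thesis using w z Kc by simp
qed

lemma F2: assumes w: "w \<in> carrier_vec d" shows "K *\<^sub>v (K *\<^sub>v w) = - w"
proof -
  have "K *\<^sub>v (K *\<^sub>v w) = (K * K) *\<^sub>v w" using Kc w by simp
  also have "\<dots> = - w" using sq w by simp
  finally show ?thesis .
qed

lemma F3: assumes w: "w \<in> carrier_vec d" shows "(K *\<^sub>v w) \<bullet> w = 0"
proof -
  have "(K *\<^sub>v w) \<bullet> w = - ((K *\<^sub>v w) \<bullet> w)"
    using F1[OF w w] comm_scalar_prod[of w d "K *\<^sub>v w"] w Kc by simp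
  thus ?thesis by simp
qed

lemma Kv_carrier[simp]: "w \<in> carrier_vec d \<Longrightarrow> K *\<^sub>v w \<in> carrier_vec d"
  using Kc by simp

lemma nf_ind: "2*m \<le> d \<Longrightarrow> \<exists>u. (\<forall>k<2*m. u k \<in> carrier_vec d) \<and>
   (\<forall>k<2*m. \<forall>l<2*m. u k \<bullet> u l = (if k = l then 1 else 0)) \<and>
   (\<forall>a<m. u (2*a) = K *\<^sub>v u (2*a+1))"
proof (induction m)
  case 0 show ?case by auto
next
  case (Suc m)
  then obtain u where uc: "\<forall>k<2*m. u k \<in> carrier_vec d"
    and uo: "\<forall>k<2*m. \<forall>l<2*m. u k \<bullet> u l = (if k = l then 1 else 0)"
    and ur: "\<forall>a<m. u (2*a) = K *\<^sub>v u (2*a+1)" by auto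
  have lt: "2*m < d" using Suc.prems by simp
  obtain v where vc: "v \<in> carrier_vec d" and f1: "v \<bullet> v = 1" and f5: "\<forall>k<2*m. v \<bullet> u k = 0"
    using exists_orth[OF lt uc uo] by auto
  have Kvc: "K *\<^sub>v v \<in> carrier_vec d" using vc by simp
  have f3: "(K *\<^sub>v v) \<bullet> v = 0" using F3[OF vc] .
  have f4: "v \<bullet> (K *\<^sub>v v) = 0" using f3 comm_scalar_prod[OF vc Kvc] by simp
  have f2: "(K *\<^sub>v v) \<bullet> (K *\<^sub>v v) = 1" using F1[OF vc Kvc] F2[OF vc] f1 vc by simp
  have f6: "\<forall>k<2*m. u k \<bullet> v = 0" using f5 uc vc comm_scalar_prod by metis
  have f7: "\<forall>k<2*m. (K *\<^sub>v v) \<bullet> u k = 0"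
  proof (intro allI impI)
    fix k assume k: "k < 2*m"
    define a where "a = k div 2"
    have a: "a < m" using k by (simp add: a_def)
    have ukc: "u k \<in> carrier_vec d" using uc k by auto
    have "v \<bullet> (K *\<^sub>v u k) = 0"
    proof (cases "even k")
      case True
      hence k2: "k = 2*a" by (simp add: a_def)
      have c1: "u (2*a+1) \<in> carrier_vec d" using uc a by auto
      have "K *\<^sub>v u k = - u (2*a+1)" using ur a k2 F2[OF c1] by simp
      thus ?thesis using f5 a vc c1 by simp
    next
      case False
      hence k2: "k = 2*a+1" by (simp add: a_def)
      have "K *\<^sub>v u k = u (2*a)" using ur a k2 by simp
      thus ?thesis using f5 a by simp
    qed
    thus "(K *\<^sub>v v) \<bullet> u k = 0" using F1[OF vc ukc] by simp
  qed
  have f8: "\<forall>k<2*m. u k \<bullet> (K *\<^sub>v v) = 0" using f7 uc Kvc comm_scalar_prod by metis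
  define u' where "u' = u(2*m := K *\<^sub>v v, 2*m+1 := v)"
  have "\<forall>k<2*Suc m. u' k \<in> carrier_vec d"
  proof (intro allI impI)
    fix k assume "k < 2 * Suc m"
    hence "k < 2*m \<or> k = 2*m \<or> k = 2*m+1" by arith
    thus "u' k \<in> carrier_vec d" using uc vc Kvc by (auto simp: u'_def)
  qed
  moreover have "\<forall>k<2*Suc m. \<forall>l<2*Suc m. u' k \<bullet> u' l = (if k = l then 1 else 0)"
  proof (intro allI impI)
    fix k l assume "k < 2 * Suc m" "l < 2 * Suc m"
    hence "k < 2*m \<or> k = 2*m \<or> k = 2*m+1" "l < 2*m \<or> l = 2*m \<or> l = 2*m+1" by arith+
    thus "u' k \<bullet> u' l = (if k = l then 1 else 0)"
      using uo f1 f2 f3 f4 f5 f6 f7 f8 by (elim disjE) (auto simp: u'_def)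
  qed
  moreover have "\<forall>a<Suc m. u' (2*a) = K *\<^sub>v u' (2*a+1)"
    using ur by (auto simp: u'_def less_Suc_eq)
  ultimately show ?case by blast
qed

lemma normal_form: "\<exists>U. orth_mat d U \<and> K * U = U * Jm d"
proof -
  define m where "m = d div 2"
  have dm: "2*m = d" using ev by (simp add: m_def)
  obtain u where uc: "\<forall>k<d. u k \<in> carrier_vec d"
    and uo: "\<forall>k<d. \<forall>l<d. u k \<bullet> u l = (if k = l then 1 else 0)"
    and ur: "\<forall>a<m. u (2*a) = K *\<^sub>v u (2*a+1)" using nf_ind[of m] dm by auto
  define U where "U = mat d d (\<lambda>(i,j). u j $ i)"
  have Uc: "U \<in> carrier_mat d d" by (simp add: U_def)
  have "transpose_mat U * U = 1\<^sub>m d"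
  proof (rule eq_matI)
    fix i j assume "i < dim_row (1\<^sub>m d :: real mat)" "j < dim_col (1\<^sub>m d :: real mat)"
    hence i: "i < d" and j: "j < d" by auto
    have "(transpose_mat U * U) $$ (i,j) = (\<Sum>l\<in>{0..<d}. transpose_mat U $$ (i,l) * U $$ (l,j))"
      using Uc i j by (intro mult_entry) auto
    also have "\<dots> = u i \<bullet> u j" using uc i j by (auto simp: U_def scalar_prod_def intro!: sum.cong)
    also have "\<dots> = 1\<^sub>m d $$ (i,j)" using uo i j by simp
    finally show "(transpose_mat U * U) $$ (i,j) = 1\<^sub>m d $$ (i,j)" .
  qed (simp_all add: U_def)
  hence "orth_mat d U" using Uc by (simp add: orth_mat_def)
  moreover have "K * U = U * Jm d"
  proof (rule eq_matI)
    fix i j assume "i < dim_row (U * Jm d)" "j < dim_col (U * Jm d)"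
    hence i: "i < d" and j: "j < d" using Uc by auto
    have ujc: "u j \<in> carrier_vec d" using uc j by auto
    have ptj: "pt j < d" using pt_lt[OF ev j] .
    have "(K * U) $$ (i,j) = (\<Sum>l\<in>{0..<d}. K $$ (i,l) * U $$ (l,j))"
      using Uc Kc i j by (intro mult_entry) auto
    also have "\<dots> = (K *\<^sub>v u j) $ i" using Kc i j ujc
      by (auto simp: U_def scalar_prod_def intro!: sum.cong)
    also have "K *\<^sub>v u j = (if even j then -1 else 1) \<cdot>\<^sub>v u (pt j)"
    proof (cases "even j")
      case True
      define a where "a = j div 2"
      have j2: "j = 2*a" using True by (simp add: a_def)
      have a: "a < m" using j dm j2 by simp
      have c1: "u (2*a+1) \<in> carrier_vec d" using uc a dm by auto
      have "K *\<^sub>v u j = - u (2*a+1)" using ur a j2 F2[OF c1] by simp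
      moreover have "pt j = 2*a+1" using j2 by (simp add: pt_def)
      ultimately show ?thesis using True c1 by (auto intro!: eq_vecI)
    next
      case False
      define a where "a = j div 2"
      have j2: "j = 2*a+1" using False by (simp add: a_def)
      have a: "a < m" using j dm j2 by simp
      have "K *\<^sub>v u j = u (2*a)" using ur a j2 by simp
      moreover have "pt j = 2*a" using j2 by (simp add: pt_def)
      ultimately show ?thesis using False by simp
    qed
    also have "((if even j then -1 else 1) \<cdot>\<^sub>v u (pt j)) $ i = (if even j then -1 else 1) * u (pt j) $ i"
    proof -
      have "u (pt j) \<in> carrier_vec d" using uc ptj by auto
      hence "dim_vec (u (pt j)) = d" by auto
      thus ?thesis using i by simp
    qed
    also have "\<dots> = (\<Sum>l\<in>{0..<d}. if l = pt j then u l $ i * (if even j then -1 else 1) else 0)"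
      using ptj by simp
    also have "\<dots> = (\<Sum>l\<in>{0..<d}. U $$ (i,l) * Jm d $$ (l,j))"
      using i j by (intro sum.cong) (auto simp: U_def Jm_entry[OF ev])
    also have "\<dots> = (U * Jm d) $$ (i,j)"
      using Uc i j by (intro mult_entry[symmetric]) auto
    finally show "(K * U) $$ (i,j) = (U * Jm d) $$ (i,j)" .
  qed (use Uc Kc in simp_all)
  ultimately show ?thesis by blast
qed

end


lemma SS: fixes X Y :: "real mat"
  assumes X: "X \<in> carrier_mat n n" and Y: "Y \<in> carrier_mat n n"
  shows "(a \<cdot>\<^sub>m X) * (b \<cdot>\<^sub>m Y) = (a*b) \<cdot>\<^sub>m (X * Y)"
proof -
  have "(a \<cdot>\<^sub>m X) * (b \<cdot>\<^sub>m Y) = a \<cdot>\<^sub>m (X * (b \<cdot>\<^sub>m Y))"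
    using X Y by (intro mult_smult_assoc_mat) auto
  also have "X * (b \<cdot>\<^sub>m Y) = b \<cdot>\<^sub>m (X * Y)" using X Y by (intro mult_smult_distrib) auto
  finally show ?thesis using X Y by (auto intro!: eq_matI)
qed

lemma G: fixes A B M :: "real mat"
  assumes A: "A \<in> carrier_mat n n" and B: "B \<in> carrier_mat n n" and M: "M \<in> carrier_mat n n"
    and AB: "A * B = 1\<^sub>m n"
  shows "A * (c \<cdot>\<^sub>m 1\<^sub>m n + s \<cdot>\<^sub>m M) * B = c \<cdot>\<^sub>m 1\<^sub>m n + s \<cdot>\<^sub>m (A * M * B)"
proof -
  have "A * (c \<cdot>\<^sub>m 1\<^sub>m n + s \<cdot>\<^sub>m M) = A * (c \<cdot>\<^sub>m 1\<^sub>m n) + A * (s \<cdot>\<^sub>m M)"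
    using A M by (intro mult_add_distrib_mat) auto
  also have "\<dots> = c \<cdot>\<^sub>m A + s \<cdot>\<^sub>m (A * M)"
  proof -
    have "A * (c \<cdot>\<^sub>m 1\<^sub>m n) = c \<cdot>\<^sub>m (A * 1\<^sub>m n)" using A by (intro mult_smult_distrib) auto
    moreover have "A * (s \<cdot>\<^sub>m M) = s \<cdot>\<^sub>m (A * M)" using A M by (intro mult_smult_distrib) auto
    ultimately show ?thesis using A by simp
  qed
  finally have "A * (c \<cdot>\<^sub>m 1\<^sub>m n + s \<cdot>\<^sub>m M) * B = (c \<cdot>\<^sub>m A + s \<cdot>\<^sub>m (A * M)) * B" by simp
  also have "\<dots> = (c \<cdot>\<^sub>m A) * B + (s \<cdot>\<^sub>m (A * M)) * B"
    using A M B by (intro add_mult_distrib_mat) auto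
  also have "(c \<cdot>\<^sub>m A) * B = c \<cdot>\<^sub>m (A * B)" using A B by (intro mult_smult_assoc_mat) auto
  also have "(s \<cdot>\<^sub>m (A * M)) * B = s \<cdot>\<^sub>m (A * M * B)" using A B M by (intro mult_smult_assoc_mat) auto
  finally show ?thesis using AB by simp
qed

lemma H: fixes K :: "real mat"
  assumes K: "K \<in> carrier_mat n n" and sq: "K * K = - 1\<^sub>m n"
  shows "(c \<cdot>\<^sub>m 1\<^sub>m n + s \<cdot>\<^sub>m K) * (c \<cdot>\<^sub>m 1\<^sub>m n + t \<cdot>\<^sub>m K) = (c*c - s*t) \<cdot>\<^sub>m 1\<^sub>m n + (c*t + s*c) \<cdot>\<^sub>m K"
proof -
  have I: "1\<^sub>m n \<in> carrier_mat n n" by simp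
  have "(c \<cdot>\<^sub>m 1\<^sub>m n + s \<cdot>\<^sub>m K) * (c \<cdot>\<^sub>m 1\<^sub>m n + t \<cdot>\<^sub>m K) =
     (c \<cdot>\<^sub>m 1\<^sub>m n) * (c \<cdot>\<^sub>m 1\<^sub>m n + t \<cdot>\<^sub>m K) + (s \<cdot>\<^sub>m K) * (c \<cdot>\<^sub>m 1\<^sub>m n + t \<cdot>\<^sub>m K)"
    using K by (intro add_mult_distrib_mat) auto
  also have "(c \<cdot>\<^sub>m 1\<^sub>m n) * (c \<cdot>\<^sub>m 1\<^sub>m n + t \<cdot>\<^sub>m K) = (c \<cdot>\<^sub>m 1\<^sub>m n) * (c \<cdot>\<^sub>m 1\<^sub>m n) + (c \<cdot>\<^sub>m 1\<^sub>m n) * (t \<cdot>\<^sub>m K)"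
    using K by (intro mult_add_distrib_mat) auto
  also have "(s \<cdot>\<^sub>m K) * (c \<cdot>\<^sub>m 1\<^sub>m n + t \<cdot>\<^sub>m K) = (s \<cdot>\<^sub>m K) * (c \<cdot>\<^sub>m 1\<^sub>m n) + (s \<cdot>\<^sub>m K) * (t \<cdot>\<^sub>m K)"
    using K by (intro mult_add_distrib_mat) auto
  also have "(c \<cdot>\<^sub>m 1\<^sub>m n) * (c \<cdot>\<^sub>m 1\<^sub>m n) + (c \<cdot>\<^sub>m 1\<^sub>m n) * (t \<cdot>\<^sub>m K) + ((s \<cdot>\<^sub>m K) * (c \<cdot>\<^sub>m 1\<^sub>m n) + (s \<cdot>\<^sub>m K) * (t \<cdot>\<^sub>m K))
     = (c*c - s*t) \<cdot>\<^sub>m 1\<^sub>m n + (c*t + s*c) \<cdot>\<^sub>m K"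
    unfolding SS[OF I I] SS[OF I K] SS[OF K I] SS[OF K K]
    using K sq by (intro eq_matI) (auto simp: algebra_simps)
  finally show ?thesis .
qed


theorem mainTheorem10:
  fixes d :: nat and \<nu> :: "real \<Rightarrow> real" and A Ainv :: "real mat"
  assumes "even d"
    and "\<And>x y. \<nu> (x + y) = \<nu> x + \<nu> y"
    and "A \<in> carrier_mat d d" and "Ainv \<in> carrier_mat d d"
    and "inverts_mat A Ainv" and "inverts_mat Ainv A"
    and "\<And>x. x \<ge> 0 \<Longrightarrow> orth_mat d (A * Qblk d (\<nu> x) * Ainv)"
  shows "\<exists>U. orth_mat d U \<and>
           (\<forall>x\<ge>0. A * Qblk d (\<nu> x) * Ainv = U * Qblk d (\<nu> x) * transpose_mat U)"
proof -
  note ev = assms(1) and Ac = assms(3) and Bc = assms(4)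
  have AB: "A * Ainv = 1\<^sub>m d" using assms(5) Ac unfolding inverts_mat_def by simp
  have BA: "Ainv * A = 1\<^sub>m d" using assms(6) Bc unfolding inverts_mat_def by simp
  define J where "J = Jm d"
  have Jc: "J \<in> carrier_mat d d" by (simp add: J_def)
  define K where "K = A * J * Ainv"
  have Kc: "K \<in> carrier_mat d d" using Ac Bc Jc by (simp add: K_def)
  have decA: "A * Qblk d t * Ainv = cos t \<cdot>\<^sub>m 1\<^sub>m d + sin t \<cdot>\<^sub>m K" for t
    unfolding Qblk_decomp K_def J_def by (rule G[OF Ac Bc _ AB]) simp
  show ?thesis
  proof (cases "\<forall>x\<ge>0. sin (\<nu> x) = 0")
    case True
    have "orth_mat d (1\<^sub>m d)" by (simp add: orth_mat_def)
    moreover have "A * Qblk d (\<nu> x) * Ainv = 1\<^sub>m d * Qblk d (\<nu> x) * transpose_mat (1\<^sub>m d)" if x: "x \<ge> 0" for x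
    proof -
      have "A * Qblk d (\<nu> x) * Ainv = cos (\<nu> x) \<cdot>\<^sub>m 1\<^sub>m d + 0 \<cdot>\<^sub>m K" using decA True x by simp
      also have "\<dots> = cos (\<nu> x) \<cdot>\<^sub>m 1\<^sub>m d + 0 \<cdot>\<^sub>m J" using Kc Jc by (intro eq_matI) auto
      also have "\<dots> = Qblk d (\<nu> x)" using True x by (simp add: Qblk_decomp J_def)
      finally show ?thesis by (simp add: Qblk_def)
    qed
    ultimately show ?thesis by blast
  next
    case False
    then obtain x0 where x0: "x0 \<ge> 0" "sin (\<nu> x0) \<noteq> 0" by auto
    define c where "c = cos (\<nu> x0)"
    define s where "s = sin (\<nu> x0)"
    have s0: "s \<noteq> 0" using x0 by (simp add: s_def)
    have cs: "c*c + s*s = 1" unfolding c_def s_def by (metis sin_cos_squared_add3 add.commute)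
    have KK: "K * K = - 1\<^sub>m d"
    proof -
      have AJ: "A * J \<in> carrier_mat d d" using Ac Jc by simp
      have AJB: "A * J * Ainv \<in> carrier_mat d d" using AJ Bc by simp
      have "K * K = A * J * (Ainv * (A * J * Ainv))" unfolding K_def
        by (rule assoc_mult_mat[OF AJ Bc AJB])
      also have "Ainv * (A * J * Ainv) = (Ainv * (A * J)) * Ainv"
        by (rule assoc_mult_mat[OF Bc AJ Bc, symmetric])
      also have "Ainv * (A * J) = (Ainv * A) * J"
        by (rule assoc_mult_mat[OF Bc Ac Jc, symmetric])
      also have "(Ainv * A) * J = J" using BA Jc by simp
      also have "A * J * (J * Ainv) = (A * J * J) * Ainv"
        by (rule assoc_mult_mat[OF AJ Jc Bc, symmetric])
      also have "A * J * J = A * (J * J)"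
        by (rule assoc_mult_mat[OF Ac Jc Jc])
      also have "J * J = - 1\<^sub>m d" using Jm_sq[OF ev] by (simp add: J_def)
      also have "A * (- 1\<^sub>m d) = - A" using Ac by simp
      also have "(- A) * Ainv = - (A * Ainv)" using Ac Bc by simp
      finally show ?thesis using AB by simp
    qed
    define S where "S = c \<cdot>\<^sub>m 1\<^sub>m d + s \<cdot>\<^sub>m K"
    define X where "X = c \<cdot>\<^sub>m 1\<^sub>m d + (- s) \<cdot>\<^sub>m K"
    have Sc: "S \<in> carrier_mat d d" and Xc: "X \<in> carrier_mat d d" using Kc by (auto simp: S_def X_def)
    have SorthA: "orth_mat d S" using assms(7)[OF x0(1)] decA by (simp add: S_def c_def s_def)
    hence StS: "transpose_mat S * S = 1\<^sub>m d" by (simp add: orth_mat_def)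
    have SX: "S * X = 1\<^sub>m d"
      unfolding S_def X_def H[OF Kc KK] using cs Kc by (intro eq_matI) (auto simp: algebra_simps)
    have "transpose_mat S = transpose_mat S * (S * X)" using SX Sc by simp
    also have "\<dots> = (transpose_mat S * S) * X" using Sc Xc by simp
    also have "\<dots> = X" using StS Xc by simp
    finally have StX: "transpose_mat S = X" .
    have skew: "transpose_mat K = - K"
    proof (rule eq_matI)
      fix i j assume "i < dim_row (- K)" "j < dim_col (- K)"
      hence i: "i < d" and j: "j < d" using Kc by auto
      have "transpose_mat S $$ (i,j) = X $$ (i,j)" using StX by simp
      hence "c * (if j = i then 1 else 0) + s * K $$ (j,i) = c * (if i = j then 1 else 0) - s * K $$ (i,j)"
        using i j Kc by (simp add: S_def X_def)
      hence "s * K $$ (j,i) = s * (- K $$ (i,j))" by (auto split: if_splits)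
      hence "K $$ (j,i) = - K $$ (i,j)" using s0 by (metis mult_left_cancel)
      thus "transpose_mat K $$ (i,j) = (- K) $$ (i,j)" using i j Kc by simp
    qed (use Kc in auto)
    interpret skewK d K using ev Kc skew KK by unfold_locales
    obtain U where Uo: "orth_mat d U" and KU: "K * U = U * Jm d" using normal_form by blast
    have Uc: "U \<in> carrier_mat d d" and UtU: "transpose_mat U * U = 1\<^sub>m d" using Uo by (auto simp: orth_mat_def)
    have UT: "transpose_mat U \<in> carrier_mat d d" using Uc by simp
    have UUt: "U * transpose_mat U = 1\<^sub>m d"
      using mat_mult_left_right_inverse[OF UT Uc UtU] .
    have UJU: "U * J * transpose_mat U = K"
    proof -
      have "U * J * transpose_mat U = K * U * transpose_mat U" using KU by (simp add: J_def)
      also have "\<dots> = K * (U * transpose_mat U)" using Kc Uc by simp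
      finally show ?thesis using UUt Kc by simp
    qed
    have "A * Qblk d (\<nu> x) * Ainv = U * Qblk d (\<nu> x) * transpose_mat U" for x
    proof -
      have "U * Qblk d (\<nu> x) * transpose_mat U = cos (\<nu> x) \<cdot>\<^sub>m 1\<^sub>m d + sin (\<nu> x) \<cdot>\<^sub>m (U * J * transpose_mat U)"
        unfolding Qblk_decomp J_def[symmetric] using Uc Jc UUt by (intro G) auto
      thus ?thesis using UJU decA by simp
    qed
    thus ?thesis using Uo by blast
  qed
qed

end
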